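(* In the Setting below, let $I$ be an $\mathfrak n$-primary ideal of $S$. Then $$g(I)+1\le \ell_S(S/I)+2\delta.$$
   Context: Setting: $(S,\mathfrak n)$ is a one-dimensional Noetherian local domain, not regular, with infinite residue field $k$ and quotient field $K$; its integral closure $\overline S$ in $K$ is a DVR and a finite $S$-module, with uniformizer $t$, and $S/\mathfrak n\to\overline S/t\overline S$ is an isomorphism. $\mathrm{Val}$ is the valuation of $\overline S$ on $K$ with $\mathrm{Val}(t)=1$. $\delta=\ell_S(\overline S/S)$. $g(I)=\max\{\mathrm{Val}(a)\mid a\in K\setminus I,\ a\neq0\}$. *)

theory Defs
  imports "HOL-Computational_Algebra.Polynomial" "HOL-Library.Extended_Real"
begin

text \<open>The quotient field K is modelled as the whole type 'a (a field); the ring S is a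
subring of it, given as a set. Ideals of S and S-submodules of K are subsets of 'a.\<close>

definition subring :: "'a::field set \<Rightarrow> bool" where
  "subring S \<longleftrightarrow> 0 \<in> S \<and> 1 \<in> S \<and> (\<forall>x\<in>S. \<forall>y\<in>S. x + y \<in> S \<and> x - y \<in> S \<and> x * y \<in> S)"

definition submod :: "'a::field set \<Rightarrow> 'a set \<Rightarrow> bool" where
  "submod S M \<longleftrightarrow> 0 \<in> M \<and> (\<forall>x\<in>M. \<forall>y\<in>M. x + y \<in> M) \<and> (\<forall>s\<in>S. \<forall>x\<in>M. s * x \<in> M)"

definition s_ideal :: "'a::field set \<Rightarrow> 'a set \<Rightarrow> bool" where
  "s_ideal S I \<longleftrightarrow> I \<subseteq> S \<and> submod S I"

definition s_span :: "'a::field set \<Rightarrow> 'a set \<Rightarrow> 'a set" where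
  "s_span S F = {x. \<exists>c. (\<forall>f\<in>F. c f \<in> S) \<and> x = (\<Sum>f\<in>F. c f * f)}"

definition noetherian :: "'a::field set \<Rightarrow> bool" where
  "noetherian S \<longleftrightarrow> (\<forall>I. s_ideal S I \<longrightarrow> (\<exists>F. finite F \<and> F \<subseteq> S \<and> I = s_span S F))"

definition prime_ideal :: "'a::field set \<Rightarrow> 'a set \<Rightarrow> bool" where
  "prime_ideal S P \<longleftrightarrow> s_ideal S P \<and> P \<noteq> S \<and>
     (\<forall>x\<in>S. \<forall>y\<in>S. x * y \<in> P \<longrightarrow> x \<in> P \<or> y \<in> P)"

definition local_ring :: "'a::field set \<Rightarrow> 'a set \<Rightarrow> bool" where
  "local_ring S n \<longleftrightarrow> s_ideal S n \<and> n \<noteq> S \<and> (\<forall>J. s_ideal S J \<and> J \<noteq> S \<longrightarrow> J \<subseteq> n)"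

definition krull_dim :: "'a::field set \<Rightarrow> enat" where
  "krull_dim S = Sup {enat k | k. \<exists>P::nat \<Rightarrow> 'a set.
      (\<forall>i\<le>k. prime_ideal S (P i)) \<and> (\<forall>i<k. P i \<subset> P (Suc i))}"

definition regular_local :: "'a::field set \<Rightarrow> 'a set \<Rightarrow> bool" where
  "regular_local S n \<longleftrightarrow> (\<exists>F. finite F \<and> F \<subseteq> S \<and> enat (card F) = krull_dim S \<and> n = s_span S F)"

definition is_quotient_field :: "'a::field set \<Rightarrow> bool" where
  "is_quotient_field S \<longleftrightarrow> (\<forall>x. \<exists>a\<in>S. \<exists>b\<in>S. b \<noteq> 0 \<and> x = a / b)"

definition integral_closure :: "'a::field set \<Rightarrow> 'a set" where
  "integral_closure S = {x. \<exists>p::'a poly. lead_coeff p = 1 \<and> (\<forall>i. coeff p i \<in> S) \<and> poly p x = 0}"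

text \<open>A discrete (integer-valued) valuation on K; the value at 0 is irrelevant.\<close>
definition discrete_valuation :: "('a::field \<Rightarrow> int) \<Rightarrow> bool" where
  "discrete_valuation v \<longleftrightarrow>
     (\<forall>x y. x \<noteq> 0 \<longrightarrow> y \<noteq> 0 \<longrightarrow> v (x * y) = v x + v y) \<and>
     (\<forall>x y. x \<noteq> 0 \<longrightarrow> y \<noteq> 0 \<longrightarrow> x + y \<noteq> 0 \<longrightarrow> v (x + y) \<ge> min (v x) (v y)) \<and>
     (\<forall>k. \<exists>x. x \<noteq> 0 \<and> v x = k)"

definition valuation_ring :: "('a::field \<Rightarrow> int) \<Rightarrow> 'a set" where
  "valuation_ring v = {x. x = 0 \<or> v x \<ge> 0}"

text \<open>Length of the S-module N/M, for S-submodules M \<subseteq> N of K: supremum of lengths of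
strict chains of S-submodules from M to N.\<close>
definition mod_length :: "'a::field set \<Rightarrow> 'a set \<Rightarrow> 'a set \<Rightarrow> enat" where
  "mod_length S N M = Sup {enat k | k. \<exists>C::nat \<Rightarrow> 'a set. C 0 = M \<and> C k = N \<and>
      (\<forall>i\<le>k. submod S (C i)) \<and> (\<forall>i<k. C i \<subset> C (Suc i))}"

definition primary_to :: "'a::field set \<Rightarrow> 'a set \<Rightarrow> 'a set \<Rightarrow> bool" where
  "primary_to S n I \<longleftrightarrow> s_ideal S I \<and> I \<noteq> S \<and>
     (\<forall>x\<in>S. \<forall>y\<in>S. x * y \<in> I \<longrightarrow> x \<notin> I \<longrightarrow> (\<exists>k. y ^ k \<in> I)) \<and>
     {x \<in> S. \<exists>k. x ^ k \<in> I} = n"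

definition g_inv :: "('a::field \<Rightarrow> int) \<Rightarrow> 'a set \<Rightarrow> int" where
  "g_inv Val I = (GREATEST m. \<exists>a. a \<notin> I \<and> a \<noteq> 0 \<and> Val a = m)"

end

theory Submission
  imports Defs
begin

lemma dv_mult: "discrete_valuation v \<Longrightarrow> x \<noteq> 0 \<Longrightarrow> y \<noteq> 0 \<Longrightarrow> v (x*y) = v x + v y"
  unfolding discrete_valuation_def by blast

lemma dv_add: "discrete_valuation v \<Longrightarrow> x \<noteq> 0 \<Longrightarrow> y \<noteq> 0 \<Longrightarrow> x + y \<noteq> 0 \<Longrightarrow> v (x+y) \<ge> min (v x) (v y)"
  unfolding discrete_valuation_def by blast

lemma dv_one: "discrete_valuation v \<Longrightarrow> v 1 = 0"
  using dv_mult[of v 1 1] by simp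

lemma dv_neg: assumes "discrete_valuation v" "x \<noteq> 0" shows "v (-x) = v x"
proof -
  have "v ((-1) * (-1)) = v (-1) + v (-1)" using dv_mult[OF assms(1), of "-1" "-1"] by simp
  then have "v (-1) = 0" using dv_one[OF assms(1)] by simp
  moreover have "v ((-1) * x) = v (-1) + v x" using dv_mult[OF assms(1), of "-1" x] assms(2) by simp
  ultimately show ?thesis by simp
qed

lemma dv_pow: assumes "discrete_valuation v" "x \<noteq> 0" shows "v (x ^ k) = int k * v x"
  by (induction k) (simp_all add: dv_one[OF assms(1)] dv_mult[OF assms(1)] assms(2) algebra_simps)

lemma dv_div: assumes "discrete_valuation v" "x \<noteq> 0" "y \<noteq> 0" shows "v (x / y) = v x - v y"
proof -
  have "v ((x/y) * y) = v (x/y) + v y" using dv_mult[OF assms(1), of "x/y" y] assms by simp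
  then show ?thesis using assms by simp
qed

lemma dv_add_strict: assumes "discrete_valuation v" "x \<noteq> 0" "y \<noteq> 0" "v y > v x"
  shows "x + y \<noteq> 0 \<and> v (x + y) = v x"
proof -
  have nz: "x + y \<noteq> 0"
  proof
    assume "x + y = 0" then have "y = -x" by (metis add.commute eq_neg_iff_add_eq_0)
    then show False using dv_neg[OF assms(1,2)] assms(4) by simp
  qed
  have "v (x + y) \<ge> min (v x) (v y)" using dv_add[OF assms(1-3) nz] .
  moreover have "v ((x+y) + (-y)) \<ge> min (v (x+y)) (v (-y))"
    by (rule dv_add[OF assms(1) nz]) (use assms in auto)
  then have "v x \<ge> min (v (x+y)) (v (-y))" by simp
  ultimately show ?thesis using nz dv_neg[OF assms(1,3)] assms(4) by auto
qed

lemma dv_diff_strict: assumes "discrete_valuation v" "x \<noteq> 0" "y \<noteq> 0" "v y > v x"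
  shows "x - y \<noteq> 0 \<and> v (x - y) = v x"
  using dv_add_strict[OF assms(1,2), of "-y"] assms dv_neg[OF assms(1,3)] by simp

lemma chain_exists:
  fixes f :: "nat \<Rightarrow> 'a::field set"
  assumes "\<forall>k<K. f (Suc k) \<subseteq> f k" "\<forall>k\<le>K. submod S (f k)"
  shows "\<exists>C. C 0 = f K \<and> C (card {k. k<K \<and> f (Suc k) \<noteq> f k}) = f 0 \<and>
     (\<forall>i\<le>card {k. k<K \<and> f (Suc k) \<noteq> f k}. submod S (C i)) \<and>
     (\<forall>i<card {k. k<K \<and> f (Suc k) \<noteq> f k}. C i \<subset> C (Suc i))"
  using assms
proof (induction K)
  case 0
  then show ?case by (intro exI[of _ "\<lambda>_. f 0"]) auto
next
  case (Suc K)
  from Suc obtain C where C: "C 0 = f K" "C (card {k. k<K \<and> f (Suc k) \<noteq> f k}) = f 0"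
     "(\<forall>i\<le>card {k. k<K \<and> f (Suc k) \<noteq> f k}. submod S (C i))"
     "(\<forall>i<card {k. k<K \<and> f (Suc k) \<noteq> f k}. C i \<subset> C (Suc i))" by auto
  define c where "c = card {k. k<K \<and> f (Suc k) \<noteq> f k}"
  show ?case
  proof (cases "f (Suc K) = f K")
    case True
    then have "{k. k<Suc K \<and> f (Suc k) \<noteq> f k} = {k. k<K \<and> f (Suc k) \<noteq> f k}"
      using less_Suc_eq by auto
    then show ?thesis using C True by auto
  next
    case False
    then have e: "{k. k<Suc K \<and> f (Suc k) \<noteq> f k} = insert K {k. k<K \<and> f (Suc k) \<noteq> f k}"
      using less_Suc_eq by auto
    have cc: "card {k. k<Suc K \<and> f (Suc k) \<noteq> f k} = Suc c"
      unfolding e c_def by (subst card_insert_disjoint) auto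
    define C' where "C' = (\<lambda>i. if i = 0 then f (Suc K) else C (i - 1))"
    have "C' 0 = f (Suc K)" "C' (Suc c) = f 0" using C unfolding C'_def c_def by auto
    moreover have "\<forall>i\<le>Suc c. submod S (C' i)"
    proof (intro allI impI)
      fix i assume "i \<le> Suc c"
      then show "submod S (C' i)" using C(3) Suc.prems(2) unfolding C'_def c_def by (cases i) auto
    qed
    moreover have "\<forall>i<Suc c. C' i \<subset> C' (Suc i)"
    proof (intro allI impI)
      fix i assume "i < Suc c"
      show "C' i \<subset> C' (Suc i)"
      proof (cases i)
        case 0 then show ?thesis using Suc.prems(1) False C(1) unfolding C'_def by auto
      next
        case (Suc j) then show ?thesis using C(4) \<open>i < Suc c\<close> unfolding C'_def c_def by auto
      qed
    qed
    ultimately show ?thesis using cc by metis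
  qed
qed

lemma chain_length:
  fixes f :: "nat \<Rightarrow> 'a::field set"
  assumes "\<forall>k<K. f (Suc k) \<subseteq> f k" "\<forall>k\<le>K. submod S (f k)"
  shows "enat (card {k. k<K \<and> f (Suc k) \<noteq> f k}) \<le> mod_length S (f 0) (f K)"
proof -
  from chain_exists[OF assms] obtain C where
    "C 0 = f K \<and> C (card {k. k<K \<and> f (Suc k) \<noteq> f k}) = f 0 \<and>
     (\<forall>i\<le>card {k. k<K \<and> f (Suc k) \<noteq> f k}. submod S (C i)) \<and>
     (\<forall>i<card {k. k<K \<and> f (Suc k) \<noteq> f k}. C i \<subset> C (Suc i))" by blast
  then show ?thesis unfolding mod_length_def by (intro Sup_upper) blast
qed

lemma card_mono_le: "finite B \<Longrightarrow> A \<subseteq> B \<Longrightarrow> card A \<le> card B" by (rule card_mono)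

lemma sr_sum: "subring S \<Longrightarrow> (\<forall>x\<in>A. f x \<in> S) \<Longrightarrow> sum f A \<in> S"
  by (induction A rule: infinite_finite_induct) (auto simp: subring_def)

lemma sr_prod: "subring S \<Longrightarrow> (\<forall>x\<in>A. f x \<in> S) \<Longrightarrow> prod f A \<in> S"
  by (induction A rule: infinite_finite_induct) (auto simp: subring_def)

lemma sr_neg: "subring S \<Longrightarrow> x \<in> S \<Longrightarrow> -x \<in> S"
  unfolding subring_def by (metis diff_0)

lemma sr_pow: "subring S \<Longrightarrow> x \<in> S \<Longrightarrow> x ^ k \<in> S"
  by (induction k) (auto simp: subring_def)

lemma sub_closure: assumes "subring S" shows "S \<subseteq> integral_closure S"
proof
  fix x assume x: "x \<in> S"
  have "\<forall>i. coeff [:-x, 1:] i \<in> S"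
  proof
    fix i show "coeff [:-x, 1:] i \<in> S"
      using assms x sr_neg[OF assms x] by (cases i) (auto simp: subring_def coeff_pCons split: nat.split)
  qed
  then show "x \<in> integral_closure S" unfolding integral_closure_def
    by (intro CollectI exI[of _ "[:-x, 1:]"]) simp
qed

theorem theorem4p8:
  fixes S n I :: "'a::field set" and Val :: "'a \<Rightarrow> int" and t :: 'a
  assumes subring: "subring S"
    and qf: "is_quotient_field S"
    and noeth: "noetherian S"
    and local: "local_ring S n"
    and dim1: "krull_dim S = 1"
    and not_regular: "\<not> regular_local S n"
    and infinite_residue: "infinite ((\<lambda>x. (+) x ` n) ` S)"
    and val: "discrete_valuation Val"
    and dvr: "integral_closure S = valuation_ring Val"
    and finite_mod: "\<exists>F. finite F \<and> F \<subseteq> integral_closure S \<and>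
                       integral_closure S = s_span S F"
    and unif: "t \<noteq> 0" "Val t = 1"
    and residue_iso: "S \<inter> (*) t ` integral_closure S = n"
        "\<forall>y\<in>integral_closure S. \<exists>x\<in>S. y - x \<in> (*) t ` integral_closure S"
    and primary: "primary_to S n I"
  shows "ereal (of_int (g_inv Val I) + 1)
           \<le> ereal_of_enat (mod_length S S I) + 2 * ereal_of_enat (mod_length S (integral_closure S) S)"
proof -
  define Sb where "Sb = integral_closure S"
  have memSb: "x \<in> Sb \<longleftrightarrow> x = 0 \<or> Val x \<ge> 0" for x
    unfolding Sb_def dvr valuation_ring_def by auto
  have SSb: "S \<subseteq> Sb" unfolding Sb_def by (rule sub_closure[OF subring])
  have Sval: "s \<in> S \<Longrightarrow> s \<noteq> 0 \<Longrightarrow> Val s \<ge> 0" for s using SSb memSb by auto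
  have S0: "0 \<in> S" and Sadd: "\<And>x y. x \<in> S \<Longrightarrow> y \<in> S \<Longrightarrow> x + y \<in> S"
    and Smul: "\<And>x y. x \<in> S \<Longrightarrow> y \<in> S \<Longrightarrow> x * y \<in> S"
    and Sdiff: "\<And>x y. x \<in> S \<Longrightarrow> y \<in> S \<Longrightarrow> x - y \<in> S"
    using subring unfolding subring_def by auto
  have IS: "I \<subseteq> S" and I0: "0 \<in> I" and Iadd: "\<And>x y. x \<in> I \<Longrightarrow> y \<in> I \<Longrightarrow> x + y \<in> I"
    and Imul: "\<And>s x. s \<in> S \<Longrightarrow> x \<in> I \<Longrightarrow> s * x \<in> I"
    using primary unfolding primary_to_def s_ideal_def submod_def by auto
  have rad: "{x \<in> S. \<exists>k. x ^ k \<in> I} = n" using primary unfolding primary_to_def by auto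
  have tpow0: "t ^ k \<noteq> 0" for k using unif by simp
  have valt: "Val (t ^ k) = int k" for k using dv_pow[OF val unif(1)] unif by simp

  \<comment> \<open>conductor\<close>
  obtain F where F: "finite F" "F \<subseteq> Sb" "Sb = s_span S F" using finite_mod unfolding Sb_def by auto
  have "\<forall>x. \<exists>p. fst p \<in> S \<and> snd p \<in> S \<and> snd p \<noteq> 0 \<and> x = fst p / snd p"
  proof
    fix x
    obtain a b where "a \<in> S" "b \<in> S" "b \<noteq> 0" "x = a / b" using qf unfolding is_quotient_field_def by blast
    then show "\<exists>p. fst p \<in> S \<and> snd p \<in> S \<and> snd p \<noteq> 0 \<and> x = fst p / snd p"
      by (intro exI[of _ "(a, b)"]) simp
  qed
  then have "\<exists>pp. \<forall>x. fst (pp x) \<in> S \<and> snd (pp x) \<in> S \<and> snd (pp x) \<noteq> 0 \<and> x = fst (pp x) / snd (pp x)"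
    by (rule choice)
  then obtain pp where pp: "\<forall>x. fst (pp x) \<in> S \<and> snd (pp x) \<in> S \<and> snd (pp x) \<noteq> 0 \<and> x = fst (pp x) / snd (pp x)"
    ..
  define A where "A = (\<lambda>x. fst (pp x))"
  define B where "B = (\<lambda>x. snd (pp x))"
  have AB: "A x \<in> S \<and> B x \<in> S \<and> B x \<noteq> 0 \<and> x = A x / B x" for x
    unfolding A_def B_def by (rule spec[OF pp])
  define d where "d = (\<Prod>f\<in>F. B f)"
  have Bnz: "\<And>x. B x \<noteq> 0" using AB[THEN conjunct2, THEN conjunct2, THEN conjunct1] by this
  have BS: "\<And>x. B x \<in> S" using AB[THEN conjunct2, THEN conjunct1] .
  have AS: "\<And>x. A x \<in> S" using AB[THEN conjunct1] .
  have BA: "B x * x = A x" for x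
  proof -
    have "x = A x / B x" using AB[THEN conjunct2, THEN conjunct2, THEN conjunct2] .
    then have "B x * x = B x * (A x / B x)" by (rule arg_cong[of _ _ "\<lambda>y. B x * y"])
    also have "\<dots> = A x" using Bnz[of x] by simp
    finally show ?thesis .
  qed
  have dS: "d \<in> S" unfolding d_def by (rule sr_prod[OF subring]) (simp add: BS)
  have d0: "d \<noteq> 0" unfolding d_def using F(1) by (simp add: Bnz)
  have dSb: "d * y \<in> S" if yS: "y \<in> Sb" for y
  proof -
    obtain c where c: "\<forall>f\<in>F. c f \<in> S" "y = (\<Sum>f\<in>F. c f * f)" using yS F(3) unfolding s_span_def by auto
    have "d * y = (\<Sum>f\<in>F. c f * (d * f))" unfolding c(2) by (simp add: sum_distrib_left algebra_simps)
    also have "\<dots> \<in> S"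
    proof (rule sr_sum[OF subring], intro ballI)
      fix f assume f: "f \<in> F"
      have "d = B f * (\<Prod>f'\<in>F - {f}. B f')" unfolding d_def using F(1) f by (simp add: prod.remove)
      then have "d * f = (B f * f) * (\<Prod>f'\<in>F - {f}. B f')" by (simp add: algebra_simps)
      then have "d * f = A f * (\<Prod>f'\<in>F - {f}. B f')" using BA[of f] by simp
      also have "\<dots> \<in> S" using AS BS sr_prod[OF subring, of "F - {f}" B] Smul by blast
      finally show "c f * (d * f) \<in> S" using c(1) f Smul by blast
    qed
    finally show ?thesis .
  qed
  define cnd where "cnd = nat (Val d) + 1"
  have vd: "Val d \<ge> 0" using Sval dS d0 by blast
  have cond: "b \<in> S" if "b \<noteq> 0" "Val b \<ge> int cnd" for b
  proof -
    have "Val (b / d) = Val b - Val d" using dv_div[OF val that(1) d0] .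
    then have "b / d \<in> Sb" using memSb that vd unfolding cnd_def by auto
    then have "d * (b / d) \<in> S" by (rule dSb)
    then show ?thesis using d0 by simp
  qed
  have cnd1: "cnd \<ge> 1" unfolding cnd_def by simp
  have tc_S: "t ^ cnd \<in> S" using cond[OF tpow0] valt by simp
  have tc_n: "t ^ cnd \<in> n"
  proof -
    have "t ^ (cnd - 1) \<in> Sb" using memSb valt by simp
    moreover have "t ^ cnd = t * t ^ (cnd - 1)" using cnd1 by (metis Suc_diff_le diff_Suc_1 power_Suc)
    ultimately have "t ^ cnd \<in> (*) t ` integral_closure S" unfolding Sb_def by blast
    then show ?thesis using residue_iso(1) tc_S by blast
  qed
  then obtain k where k: "(t ^ cnd) ^ k \<in> I" using rad by blast
  define m where "m = cnd * k"
  have tmI: "t ^ m \<in> I" using k unfolding m_def by (simp add: power_mult)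
  have bound: "b \<in> I" if "b \<noteq> 0" "Val b \<ge> int m + int cnd" for b
  proof -
    have "Val (b / t ^ m) = Val b - int m" using dv_div[OF val that(1) tpow0] valt by simp
    then have "b / t ^ m \<in> S" using cond[of "b / t ^ m"] that tpow0 by simp
    then have "(b / t ^ m) * t ^ m \<in> I" using Imul tmI by blast
    then show ?thesis using unif(1) by simp
  qed

  define P where "P = (\<lambda>m. \<exists>a. a \<notin> I \<and> a \<noteq> 0 \<and> Val a = m)"
  have Pb: "P z \<Longrightarrow> z < int m + int cnd" for z using bound unfolding P_def by force
  have Pm1: "P (-1)"
  proof -
    have "Val (1 / t) = -1" using dv_div[OF val _ unif(1), of 1] dv_one[OF val] unif by simp
    moreover have "1 / t \<notin> I" using IS SSb memSb calculation unif by auto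
    ultimately show ?thesis unfolding P_def using unif by (intro exI[of _ "1/t"]) auto
  qed
  define Q where "Q = {z. P z \<and> z \<ge> -1}"
  have Qfin: "finite Q" by (rule finite_subset[of _ "{-1..int m + int cnd}"]) (auto simp: Q_def dest: Pb)
  have QM: "Max Q \<in> Q" using Qfin Pm1 by (intro Max_in) (auto simp: Q_def)
  have Pg: "P (Max Q)" using QM unfolding Q_def by auto
  have Pge: "P z \<Longrightarrow> z \<le> Max Q" for z
    using Max_ge[OF Qfin, of z] Max_ge[OF Qfin, of "-1"] Pm1 by (cases "z \<ge> -1") (auto simp: Q_def)
  have geq: "g_inv Val I = Max Q" unfolding g_inv_def P_def[symmetric]
    by (rule Greatest_equality) (use Pg Pge in auto)
  define g where "g = Max Q"
  obtain a where a: "a \<notin> I" "a \<noteq> 0" "Val a = g" using Pg unfolding P_def g_def by auto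
  have above: "b \<in> I" if "b = 0 \<or> Val b > g" for b
    using that I0 Pge unfolding P_def g_def by force
  show ?thesis
  proof (cases "g < 0")
    case True
    then have "ereal (of_int (g_inv Val I) + 1) \<le> 0" using geq g_def by simp
    also have "0 \<le> ereal_of_enat (mod_length S S I) + 2 * ereal_of_enat (mod_length S (integral_closure S) S)"
      by (simp add: ereal_of_enat_nonneg)
    finally show ?thesis .
  next
    case False
    define gn where "gn = nat g"
    have ggn: "g = int gn" using False gn_def by simp
    define H where "H = {k. k \<le> gn \<and> (\<exists>s\<in>S. s \<noteq> 0 \<and> Val s = int k)}"
    define G where "G = {k. k \<le> gn} - H"
    define V where "V = {k. k \<le> gn \<and> (\<exists>i\<in>I. i \<noteq> 0 \<and> Val i = int k)}"
    have VH: "V \<subseteq> H" unfolding V_def H_def using IS by blast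
    have finH: "finite H" and finV: "finite V" and finG: "finite G"
      unfolding H_def V_def G_def by auto
    have cardHG: "card H + card G = gn + 1"
    proof -
      have "H \<subseteq> {k. k \<le> gn}" unfolding H_def by auto
      then have "card H + card G = card {k. k \<le> gn}" unfolding G_def
        by (metis card_Diff_subset finH atMost_def card_mono finite_atMost le_add_diff_inverse)
      then show ?thesis by simp
    qed
    have VG: "card V \<le> card G"
    proof -
      have "inj_on (\<lambda>k. gn - k) V" unfolding inj_on_def V_def by auto
      moreover have "(\<lambda>k. gn - k) ` V \<subseteq> G"
      proof
        fix x assume "x \<in> (\<lambda>k. gn - k) ` V"
        then obtain kk where kk: "kk \<in> V" "x = gn - kk" by auto
        obtain i where i: "i \<in> I" "i \<noteq> 0" "Val i = int kk" "kk \<le> gn" using kk(1) unfolding V_def by auto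
        have "x \<notin> H"
        proof
          assume "x \<in> H"
          then obtain s where s: "s \<in> S" "s \<noteq> 0" "Val s = int x" unfolding H_def by auto
          have si0: "s * i \<noteq> 0" using s i by simp
          have vsi: "Val (s * i) = g" using dv_mult[OF val s(2) i(2)] s i kk ggn by simp
          define u where "u = a / (s * i)"
          have vu: "Val u = 0" unfolding u_def using dv_div[OF val a(2) si0] vsi a by simp
          have "u \<in> Sb" using memSb vu by simp
          then obtain lam where lam: "lam \<in> S" "u - lam \<in> (*) t ` Sb" using residue_iso(2) unfolding Sb_def by blast
          then obtain w where w: "w \<in> Sb" "u - lam = t * w" by auto
          have "a = lam * s * i + (u - lam) * (s * i)" unfolding u_def using si0 by (simp add: algebra_simps)
          moreover have "lam * s * i \<in> I" using Imul[OF Smul[OF lam(1) s(1)] i(1)] by (simp add: mult.assoc)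
          moreover have "(u - lam) * (s * i) \<in> I"
          proof (rule above)
            show "(u - lam) * (s * i) = 0 \<or> g < Val ((u - lam) * (s * i))"
            proof (cases "w = 0")
              case True then show ?thesis using w by simp
            next
              case False
              have "Val (t * w) = 1 + Val w" using dv_mult[OF val unif(1) False] unif by simp
              moreover have "Val w \<ge> 0" using w(1) memSb False by auto
              moreover have "Val ((t * w) * (s * i)) = Val (t * w) + Val (s * i)"
                using dv_mult[OF val _ si0, of "t*w"] False unif by simp
              ultimately show ?thesis using w(2) vsi by simp
            qed
          qed
          ultimately have "a \<in> I" using Iadd by metis
          then show False using a by simp
        qed
        then show "x \<in> G" unfolding G_def using kk by auto
      qed
      ultimately show ?thesis using card_inj_on_le finG by blast
    qed
    have Tsub: "submod S {x. x = 0 \<or> Val x \<ge> int kk}" for kk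
      unfolding submod_def
    proof (intro conjI ballI)
      fix x y assume "x \<in> {x. x = 0 \<or> Val x \<ge> int kk}" "y \<in> {x. x = 0 \<or> Val x \<ge> int kk}"
      then show "x + y \<in> {x. x = 0 \<or> Val x \<ge> int kk}"
        using dv_add[OF val, of x y] by (cases "x = 0"; cases "y = 0"; cases "x + y = 0") auto
    next
      fix s x assume "s \<in> S" "x \<in> {x. x = 0 \<or> Val x \<ge> int kk}"
      then show "s * x \<in> {x. x = 0 \<or> Val x \<ge> int kk}"
        using dv_mult[OF val, of s x] Sval[of s] by (cases "s = 0"; cases "x = 0") auto
    qed simp
    define T where "T = (\<lambda>kk::nat. {x. x = 0 \<or> Val x \<ge> int kk})"
    define f where "f = (\<lambda>kk. if kk \<le> gn then {x + y | x y. x \<in> S \<and> y \<in> T kk} else S)"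
    have Tmono: "kk \<le> j \<Longrightarrow> T j \<subseteq> T kk" for kk j unfolding T_def by auto
    have sumsub: "submod S {x + y | x y. x \<in> S \<and> y \<in> T kk}" for kk
      unfolding submod_def
    proof (intro conjI ballI)
      show "0 \<in> {x + y | x y. x \<in> S \<and> y \<in> T kk}" using S0 unfolding T_def by force
    next
      fix x y assume "x \<in> {x + y | x y. x \<in> S \<and> y \<in> T kk}" "y \<in> {x + y | x y. x \<in> S \<and> y \<in> T kk}"
      then obtain x1 x2 y1 y2 where "x = x1 + x2" "y = y1 + y2" "x1 \<in> S" "y1 \<in> S" "x2 \<in> T kk" "y2 \<in> T kk" by auto
      moreover have "x2 + y2 \<in> T kk" using Tsub[of kk] calculation unfolding submod_def T_def by blast
      ultimately show "x + y \<in> {x + y | x y. x \<in> S \<and> y \<in> T kk}"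
        by (intro CollectI exI[of _ "x1 + y1"] exI[of _ "x2 + y2"]) (auto simp: Sadd algebra_simps)
    next
      fix s x assume s: "s \<in> S" and "x \<in> {x + y | x y. x \<in> S \<and> y \<in> T kk}"
      then obtain x1 x2 where "x = x1 + x2" "x1 \<in> S" "x2 \<in> T kk" by auto
      moreover have "s * x2 \<in> T kk" using Tsub[of kk] calculation s unfolding submod_def T_def by blast
      ultimately show "s * x \<in> {x + y | x y. x \<in> S \<and> y \<in> T kk}"
        by (intro CollectI exI[of _ "s * x1"] exI[of _ "s * x2"]) (auto simp: Smul[OF s] algebra_simps)
    qed
    have Ssubsum: "S \<subseteq> {x + y | x y. x \<in> S \<and> y \<in> T kk}" for kk
      unfolding T_def by force
    have fsub: "\<forall>kk<gn+1. f (Suc kk) \<subseteq> f kk"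
    proof (intro allI impI)
      fix kk assume "kk < gn + 1"
      show "f (Suc kk) \<subseteq> f kk"
      proof (cases "Suc kk \<le> gn")
        case True then show ?thesis unfolding f_def using Tmono[of kk "Suc kk"] by auto
      next
        case False then show ?thesis unfolding f_def using Ssubsum by auto
      qed
    qed
    have fmod: "\<forall>kk\<le>gn+1. submod S (f kk)"
      using sumsub subring unfolding f_def submod_def subring_def by auto
    have f0: "f 0 = integral_closure S"
    proof -
      have "T 0 = Sb" unfolding T_def using memSb by auto
      then have "f 0 = {x + y | x y. x \<in> S \<and> y \<in> Sb}" unfolding f_def by simp
      also have "\<dots> = Sb"
      proof
        show "{x + y | x y. x \<in> S \<and> y \<in> Sb} \<subseteq> Sb"
          using Tsub[of 0] SSb memSb unfolding submod_def by force
        show "Sb \<subseteq> {x + y | x y. x \<in> S \<and> y \<in> Sb}" using S0 by force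
      qed
      finally show ?thesis unfolding Sb_def .
    qed
    have fK: "f (gn+1) = S" unfolding f_def by simp
    have L2: "enat (card {kk. kk<gn+1 \<and> f (Suc kk) \<noteq> f kk}) \<le> mod_length S (integral_closure S) S"
      using chain_length[OF fsub fmod] f0 fK by simp
    have G_strict: "G \<subseteq> {kk. kk<gn+1 \<and> f (Suc kk) \<noteq> f kk}"
    proof
      fix kk assume kk: "kk \<in> G"
      then have kkg: "kk \<le> gn" and nH: "\<not> (\<exists>s\<in>S. s \<noteq> 0 \<and> Val s = int kk)" unfolding G_def H_def by auto
      have "t ^ kk \<in> f kk" unfolding f_def T_def using kkg S0 valt by force
      moreover have "t ^ kk \<notin> f (Suc kk)"
      proof
        assume tin: "t ^ kk \<in> f (Suc kk)"
        have "\<exists>s y. t ^ kk = s + y \<and> s \<in> S \<and> (y = 0 \<or> Val y \<ge> int (Suc kk))"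
        proof (cases "Suc kk \<le> gn")
          case True then show ?thesis using tin unfolding f_def T_def by auto
        next
          case False then show ?thesis using tin unfolding f_def
            by (intro exI[of _ "t ^ kk"] exI[of _ 0]) auto
        qed
        then obtain s y where sy: "t ^ kk = s + y" "s \<in> S" "y = 0 \<or> Val y \<ge> int (Suc kk)"
          by blast
        have "s \<noteq> 0 \<and> Val s = int kk"
        proof (cases "y = 0")
          case True then show ?thesis using sy unif(1) valt[of kk] by auto
        next
          case False
          have seq: "s = t ^ kk - y" using sy by simp
          have hv: "Val y > Val (t ^ kk)" using sy(3) False valt[of kk] by auto
          have X: "t ^ kk - y \<noteq> 0 \<and> Val (t ^ kk - y) = Val (t ^ kk)"
            by (rule dv_diff_strict[OF val tpow0 False hv])
          show ?thesis unfolding seq using X valt[of kk] by simp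
        qed
        then show False using nH sy by blast
      qed
      ultimately show "kk \<in> {kk. kk<gn+1 \<and> f (Suc kk) \<noteq> f kk}" using kkg by auto
    qed
    have c2: "card G \<le> card {kk. kk<gn+1 \<and> f (Suc kk) \<noteq> f kk}"
      by (rule card_mono[OF _ G_strict]) simp
    define h where "h = (\<lambda>kk. {x + y | x y. x \<in> I \<and> y \<in> S \<inter> T kk})"
    have hsub: "\<forall>kk<gn+1. h (Suc kk) \<subseteq> h kk"
    proof (intro allI impI subsetI)
      fix kk x assume "x \<in> h (Suc kk)"
      then obtain x1 x2 where "x = x1 + x2" "x1 \<in> I" "x2 \<in> S \<inter> T (Suc kk)" unfolding h_def by blast
      moreover have "T (Suc kk) \<subseteq> T kk" by (rule Tmono) simp
      ultimately show "x \<in> h kk" unfolding h_def by blast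
    qed
    have hmod: "\<forall>kk\<le>gn+1. submod S (h kk)"
    proof (intro allI impI)
      fix kk
      show "submod S (h kk)"
        unfolding submod_def
      proof (intro conjI ballI)
        show "0 \<in> h kk" using S0 I0 unfolding h_def T_def by force
      next
        fix x y assume "x \<in> h kk" "y \<in> h kk"
        then obtain x1 x2 y1 y2 where "x = x1 + x2" "y = y1 + y2" "x1 \<in> I" "y1 \<in> I" "x2 \<in> S \<inter> T kk" "y2 \<in> S \<inter> T kk"
          unfolding h_def by auto
        moreover have "x2 + y2 \<in> T kk" using Tsub[of kk] calculation unfolding submod_def T_def by blast
        ultimately show "x + y \<in> h kk" unfolding h_def
          by (intro CollectI exI[of _ "x1 + y1"] exI[of _ "x2 + y2"]) (auto simp: Sadd Iadd algebra_simps)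
      next
        fix s x assume s: "s \<in> S" and "x \<in> h kk"
        then obtain x1 x2 where "x = x1 + x2" "x1 \<in> I" "x2 \<in> S \<inter> T kk" unfolding h_def by auto
        moreover have "s * x2 \<in> T kk" using Tsub[of kk] calculation s unfolding submod_def T_def by blast
        ultimately show "s * x \<in> h kk" unfolding h_def
          by (intro CollectI exI[of _ "s * x1"] exI[of _ "s * x2"]) (auto simp: Smul[OF s] Imul[OF s] algebra_simps)
      qed
    qed
    have h0: "h 0 = S"
    proof
      show "h 0 \<subseteq> S" unfolding h_def using IS Sadd by auto
      show "S \<subseteq> h 0" unfolding h_def T_def using I0 Sval by force
    qed
    have hK: "h (gn+1) = I"
    proof
      show "h (gn+1) \<subseteq> I"
      proof
        fix x assume "x \<in> h (gn+1)"
        then obtain x1 x2 where "x = x1 + x2" "x1 \<in> I" "x2 = 0 \<or> Val x2 \<ge> int (gn+1)"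
          unfolding h_def T_def by auto
        moreover have "x2 \<in> I" using above calculation ggn by auto
        ultimately show "x \<in> I" using Iadd by simp
      qed
      show "I \<subseteq> h (gn+1)" unfolding h_def T_def using S0 by force
    qed
    have L1: "enat (card {kk. kk<gn+1 \<and> h (Suc kk) \<noteq> h kk}) \<le> mod_length S S I"
      using chain_length[OF hsub hmod] h0 hK by simp
    have HV_strict: "H - V \<subseteq> {kk. kk<gn+1 \<and> h (Suc kk) \<noteq> h kk}"
    proof
      fix kk assume kk: "kk \<in> H - V"
      then obtain s where s: "s \<in> S" "s \<noteq> 0" "Val s = int kk" and kkg: "kk \<le> gn" unfolding H_def by auto
      have nV: "\<not> (\<exists>i\<in>I. i \<noteq> 0 \<and> Val i = int kk)" using kk kkg unfolding V_def by auto
      have "s \<in> h kk" unfolding h_def T_def using I0 s by force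
      moreover have "s \<notin> h (Suc kk)"
      proof
        assume "s \<in> h (Suc kk)"
        then obtain i y where iy: "s = i + y" "i \<in> I" "y = 0 \<or> Val y \<ge> int (Suc kk)"
          unfolding h_def T_def by auto
        have "i \<noteq> 0 \<and> Val i = int kk"
        proof (cases "y = 0")
          case True then show ?thesis using iy s by simp
        next
          case False
          have "i = s - y" using iy by simp
          then show ?thesis using dv_diff_strict[OF val s(2) False] iy False s by simp
        qed
        then show False using nV iy by blast
      qed
      ultimately show "kk \<in> {kk. kk<gn+1 \<and> h (Suc kk) \<noteq> h kk}" using kkg by auto
    qed
    have c1: "card H - card V \<le> card {kk. kk<gn+1 \<and> h (Suc kk) \<noteq> h kk}"
      using card_mono[OF _ HV_strict] card_Diff_subset[OF finV VH] by simp
    define c1v where "c1v = card {kk. kk<gn+1 \<and> h (Suc kk) \<noteq> h kk}"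
    define c2v where "c2v = card {kk. kk<gn+1 \<and> f (Suc kk) \<noteq> f kk}"
    have arith: "gn + 1 \<le> c1v + 2 * c2v" using c1 c2 VG cardHG unfolding c1v_def c2v_def by linarith
    have "ereal (of_int (g_inv Val I) + 1) = ereal (real (gn + 1))" using geq g_def ggn by simp
    also have "\<dots> \<le> ereal (real (c1v + 2 * c2v))" using arith by simp
    also have "\<dots> = ereal_of_enat (enat c1v) + 2 * ereal_of_enat (enat c2v)" by simp
    also have "\<dots> \<le> ereal_of_enat (mod_length S S I) + 2 * ereal_of_enat (mod_length S (integral_closure S) S)"
    proof (rule add_mono)
      show "ereal_of_enat (enat c1v) \<le> ereal_of_enat (mod_length S S I)"
        using L1 unfolding c1v_def by (simp only: ereal_of_enat_le_iff)
      have "ereal_of_enat (enat c2v) \<le> ereal_of_enat (mod_length S (integral_closure S) S)"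
        using L2 unfolding c2v_def by (simp only: ereal_of_enat_le_iff)
      then show "2 * ereal_of_enat (enat c2v) \<le> 2 * ereal_of_enat (mod_length S (integral_closure S) S)"
        by (rule ereal_mult_left_mono) simp
    qed
    finally show ?thesis .
  qed
qed

end
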